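(* Let $\vartheta$ be a primitive semi-compatible random substitution with topological entropy $s$. Then \[ s\;\leqslant\;\frac{1}{\lambda-1}\bm q_1^\intercal\bm R . \]
   Context: Let $\mathcal A=\{a_1,\dots,a_n\}$ be a finite alphabet, $\mathcal A^+$ the finite non-empty words over $\mathcal A$. A random substitution is a map $\vartheta$ from $\mathcal A$ to finite non-empty subsets of $\mathcal A^+$, extended to words by $\vartheta(u_1\cdots u_m)=\{w_1\cdots w_m: w_k\in\vartheta(u_k)\}$ and to sets of words by unions; powers $\vartheta^m$ are compositions. $|u|_a$ is the number of occurrences of letter $a$ in $u$; $\Phi(u)=(|u|_{a_1},\dots,|u|_{a_n})^\intercal$. $\vartheta$ is semi-compatible if for each $a$ all words in $\vartheta(a)$ have the same $\Phi$. Substitution matrix $M_{ij}=|u|_{a_i}$, $u\in\vartheta(a_j)$; primitive means $M$ primitive, with Perron–Frobenius eigenvalue $\lambda$ and right PF eigenvector $\bm R$ normalised by $\|\bm R\|_1=1$. $\bm q_1=(\log\#\vartheta(a_1),\dots,\log\#\vartheta(a_n))^\intercal$. The language $\mathcal L$ is the set of all subwords of words in $\vartheta^m(a)$, $a\in\mathcal A$, $m\in\mathbb N$; $\mathcal L_\ell$ its words of length $\ell$; the topological entropy is $s=\lim_{\ell\to\infty}\frac1\ell\log\#\mathcal L_\ell$ (the topological entropy of the associated subshift). *)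

theory Defs
  imports "HOL-Analysis.Analysis"
begin

text \<open>Alphabet = a finite type 'a; words = lists; a random substitution maps
each letter to a set of words.\<close>

definition is_random_substitution :: "('a \<Rightarrow> 'a list set) \<Rightarrow> bool" where
  "is_random_substitution \<theta> \<longleftrightarrow>
     (\<forall>a. finite (\<theta> a) \<and> \<theta> a \<noteq> {} \<and> (\<forall>u\<in>\<theta> a. u \<noteq> []))"

fun subst_word :: "('a \<Rightarrow> 'a list set) \<Rightarrow> 'a list \<Rightarrow> 'a list set" where
  "subst_word \<theta> [] = {[]}"
| "subst_word \<theta> (x # xs) = {w @ v | w v. w \<in> \<theta> x \<and> v \<in> subst_word \<theta> xs}"

definition subst_set :: "('a \<Rightarrow> 'a list set) \<Rightarrow> 'a list set \<Rightarrow> 'a list set" where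
  "subst_set \<theta> S = (\<Union>u\<in>S. subst_word \<theta> u)"

text \<open>m-th power of the random substitution applied to a letter.\<close>
definition subst_pow :: "('a \<Rightarrow> 'a list set) \<Rightarrow> nat \<Rightarrow> 'a \<Rightarrow> 'a list set" where
  "subst_pow \<theta> m a = (subst_set \<theta> ^^ m) {[a]}"

definition abelianisation :: "'a::finite list \<Rightarrow> real ^ 'a" where
  "abelianisation u = (\<chi> b. real (count_list u b))"

definition semi_compatible :: "('a::finite \<Rightarrow> 'a list set) \<Rightarrow> bool" where
  "semi_compatible \<theta> \<longleftrightarrow>
     (\<forall>a. \<forall>u\<in>\<theta> a. \<forall>v\<in>\<theta> a. abelianisation u = abelianisation v)"

text \<open>Substitution matrix: entry (i,j) = number of occurrences of i in a word of \<theta>(j).\<close>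
definition subst_matrix :: "('a::finite \<Rightarrow> 'a list set) \<Rightarrow> real ^ 'a ^ 'a" where
  "subst_matrix \<theta> = (\<chi> i j. real (count_list (SOME u. u \<in> \<theta> j) i))"

definition mat_pow :: "real ^ 'n ^ 'n \<Rightarrow> nat \<Rightarrow> real ^ 'n ^ 'n" where
  "mat_pow M k = ((\<lambda>X. X ** M) ^^ k) (mat 1)"

definition primitive_matrix :: "real ^ 'n ^ 'n \<Rightarrow> bool" where
  "primitive_matrix M \<longleftrightarrow> (\<forall>i j. M $ i $ j \<ge> 0) \<and>
     (\<exists>k>0. \<forall>i j. mat_pow M k $ i $ j > 0)"

text \<open>Spectral radius (= Perron--Frobenius eigenvalue for primitive matrices):
  the largest modulus of a complex eigenvalue.\<close>
definition pf_eigenvalue :: "real ^ 'n ^ 'n \<Rightarrow> real" where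
  "pf_eigenvalue M = Max {cmod \<mu> | \<mu>. \<exists>v :: complex ^ 'n. v \<noteq> 0 \<and>
       (\<chi> i j. complex_of_real (M $ i $ j)) *v v = \<mu> *s v}"

text \<open>Right PF eigenvector, normalised to 1-norm 1 (nonnegative entries).\<close>
definition is_right_pf_vector :: "real ^ 'n ^ 'n \<Rightarrow> real ^ 'n \<Rightarrow> bool" where
  "is_right_pf_vector M R \<longleftrightarrow> M *v R = pf_eigenvalue M *s R \<and>
     (\<forall>i. R $ i \<ge> 0) \<and> (\<Sum>i\<in>UNIV. \<bar>R $ i\<bar>) = 1"

definition log_card_vector :: "('a::finite \<Rightarrow> 'a list set) \<Rightarrow> real ^ 'a" where
  "log_card_vector \<theta> = (\<chi> a. ln (real (card (\<theta> a))))"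

text \<open>Language: all (contiguous) subwords of words in \<theta>^m(a).\<close>
definition language :: "('a \<Rightarrow> 'a list set) \<Rightarrow> 'a list set" where
  "language \<theta> = {v. \<exists>a m w p s. w \<in> subst_pow \<theta> m a \<and> w = p @ v @ s}"

definition language_len :: "('a \<Rightarrow> 'a list set) \<Rightarrow> nat \<Rightarrow> 'a list set" where
  "language_len \<theta> l = {v \<in> language \<theta>. length v = l}"

text \<open>Topological entropy s: the limit of (1/l) log #L_l.\<close>
definition has_topological_entropy :: "('a \<Rightarrow> 'a list set) \<Rightarrow> real \<Rightarrow> bool" where
  "has_topological_entropy \<theta> s \<longleftrightarrow>
     ((\<lambda>l. ln (real (card (language_len \<theta> l))) / real l) \<longlonglongrightarrow> s)"

end

theory Submission
  imports Defs
begin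


definition conc :: "'a list set \<Rightarrow> 'a list set \<Rightarrow> 'a list set" where
  "conc S T = {w @ v | w v. w \<in> S \<and> v \<in> T}"

lemma subst_word_Cons: "subst_word \<tau> (x # xs) = conc (\<tau> x) (subst_word \<tau> xs)"
  by (simp add: conc_def)

lemma subst_word_append:
  "subst_word \<theta> (u @ v) = conc (subst_word \<theta> u) (subst_word \<theta> v)"
proof (induction u)
  case Nil
  then show ?case by (auto simp: conc_def)
next
  case (Cons x u)
  show ?case
    unfolding append_Cons subst_word.simps Cons.IH
    by (auto simp: conc_def) (metis append.assoc)+
qed

lemma subst_set_conc: "subst_set \<theta> (conc S T) = conc (subst_set \<theta> S) (subst_set \<theta> T)"
proof (rule set_eqI)
  fix x
  show "x \<in> subst_set \<theta> (conc S T) \<longleftrightarrow> x \<in> conc (subst_set \<theta> S) (subst_set \<theta> T)"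
  proof
    assume "x \<in> subst_set \<theta> (conc S T)"
    then obtain u v where "u \<in> S" "v \<in> T" "x \<in> subst_word \<theta> (u @ v)"
      unfolding subst_set_def conc_def by auto
    then show "x \<in> conc (subst_set \<theta> S) (subst_set \<theta> T)"
      unfolding subst_word_append subst_set_def conc_def by blast
  next
    assume "x \<in> conc (subst_set \<theta> S) (subst_set \<theta> T)"
    then obtain w1 w2 u v where "u \<in> S" "v \<in> T" "w1 \<in> subst_word \<theta> u" "w2 \<in> subst_word \<theta> v" "x = w1 @ w2"
      unfolding subst_set_def conc_def by auto
    then have "x \<in> subst_word \<theta> (u @ v)" unfolding subst_word_append conc_def by blast
    then show "x \<in> subst_set \<theta> (conc S T)"
      unfolding subst_set_def conc_def using \<open>u \<in> S\<close> \<open>v \<in> T\<close> by blast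
  qed
qed

lemma funpow_conc: "(subst_set \<theta> ^^ p) (conc S T) = conc ((subst_set \<theta> ^^ p) S) ((subst_set \<theta> ^^ p) T)"
proof (induction p)
  case 0 then show ?case by simp
next
  case (Suc p)
  have "(subst_set \<theta> ^^ Suc p) (conc S T) = subst_set \<theta> ((subst_set \<theta> ^^ p) (conc S T))" by simp
  also have "\<dots> = conc ((subst_set \<theta> ^^ Suc p) S) ((subst_set \<theta> ^^ Suc p) T)"
    unfolding Suc subst_set_conc by simp
  finally show ?case .
qed

lemma subst_set_single: "subst_set \<theta> {u} = subst_word \<theta> u"
  by (simp add: subst_set_def)

lemma subst_set_UN: "subst_set \<theta> (\<Union>i\<in>I. A i) = (\<Union>i\<in>I. subst_set \<theta> (A i))"
  unfolding subst_set_def by auto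

lemma funpow_UN: "(subst_set \<theta> ^^ p) S = (\<Union>u\<in>S. (subst_set \<theta> ^^ p) {u})"
proof (induction p arbitrary: S)
  case 0 then show ?case by auto
next
  case (Suc p)
  have "(subst_set \<theta> ^^ Suc p) S = subst_set \<theta> ((subst_set \<theta> ^^ p) S)" by simp
  also have "\<dots> = subst_set \<theta> (\<Union>u\<in>S. (subst_set \<theta> ^^ p) {u})" using Suc[of S] by (rule arg_cong)
  also have "\<dots> = (\<Union>u\<in>S. (subst_set \<theta> ^^ Suc p) {u})" by (simp add: subst_set_UN)
  finally show ?case .
qed

lemma funpow_single: "(subst_set \<theta> ^^ p) {u} = subst_word (subst_pow \<theta> p) u"
proof (induction u)
  case Nil
  have "(subst_set \<theta> ^^ p) {[]} = {[]}"
  proof (induction p)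
    case 0 then show ?case by simp
  next
    case (Suc p) then show ?case by (simp add: subst_set_single del: subst_word.simps) simp
  qed
  then show ?case by simp
next
  case (Cons x u)
  have "{x # u} = conc {[x]} {u}" by (auto simp: conc_def)
  then have "(subst_set \<theta> ^^ p) {x # u} = conc ((subst_set \<theta> ^^ p) {[x]}) ((subst_set \<theta> ^^ p) {u})"
    by (simp add: funpow_conc)
  then show ?case using Cons by (simp only: subst_word_Cons subst_pow_def)
qed

lemma subst_pow_add:
  "subst_pow \<theta> (j + p) a = (\<Union>u\<in>subst_pow \<theta> j a. subst_word (subst_pow \<theta> p) u)"
proof -
  have "subst_pow \<theta> (j + p) a = (subst_set \<theta> ^^ p) (subst_pow \<theta> j a)"
    unfolding subst_pow_def add.commute[of j p] funpow_add by simp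
  also have "\<dots> = (\<Union>u\<in>subst_pow \<theta> j a. subst_word (subst_pow \<theta> p) u)"
    by (subst funpow_UN) (simp add: funpow_single)
  finally show ?thesis .
qed

lemma subst_pow_Suc:
  "subst_pow \<theta> (Suc j) a = (\<Union>u\<in>subst_pow \<theta> j a. subst_word \<theta> u)"
  unfolding subst_pow_def by (simp add: subst_set_def)

lemma finite_subst_word: "(\<And>a. finite (\<tau> a)) \<Longrightarrow> finite (subst_word \<tau> u)"
proof (induction u)
  case Nil then show ?case by simp
next
  case (Cons x u)
  have "subst_word \<tau> (x # u) = (\<lambda>(w,v). w @ v) ` (\<tau> x \<times> subst_word \<tau> u)" by auto
  then show ?case using Cons by simp
qed

lemma card_subst_word_Cons:
  assumes "\<And>a. finite (\<tau> a)"
  shows "card (subst_word \<tau> (x # u)) \<le> card (\<tau> x) * card (subst_word \<tau> u)"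
proof -
  have "subst_word \<tau> (x # u) = (\<lambda>(w,v). w @ v) ` (\<tau> x \<times> subst_word \<tau> u)" by auto
  then have "card (subst_word \<tau> (x # u)) \<le> card (\<tau> x \<times> subst_word \<tau> u)"
    by (metis card_image_le assms finite_SigmaI finite_subst_word)
  then show ?thesis by (simp add: card_cartesian_product)
qed

lemma finite_subst_pow: "(\<And>a. finite (\<theta> a)) \<Longrightarrow> finite (subst_pow \<theta> j a)"
proof (induction j)
  case 0 then show ?case by (simp add: subst_pow_def)
next
  case (Suc j)
  show ?case unfolding subst_pow_Suc
    by (rule finite_UN_I) (use Suc in \<open>auto intro: finite_subst_word\<close>)
qed

lemma length_subst_word:
  assumes "\<And>a w. w \<in> \<tau> a \<Longrightarrow> length w = L a"
  shows "x \<in> subst_word \<tau> u \<Longrightarrow> length x = sum_list (map L u)"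
proof (induction u arbitrary: x)
  case Nil then show ?case by simp
next
  case (Cons a u)
  then obtain w v where "x = w @ v" "w \<in> \<tau> a" "v \<in> subst_word \<tau> u" by auto
  then show ?case using Cons.IH assms by simp
qed



lemma abel_append: "abelianisation (u @ v) = abelianisation u + abelianisation v"
  by (simp add: abelianisation_def vec_eq_iff)

lemma abel_Nil: "abelianisation [] = 0"
  by (simp add: abelianisation_def vec_eq_iff)

lemma abel_single_nth: "abelianisation [x] $ j = (if x = j then 1 else 0)"
  by (simp add: abelianisation_def)

lemma length_abel: "real (length w) = (\<Sum>i\<in>UNIV. abelianisation w $ i)"
proof -
  have "length w = (\<Sum>i\<in>UNIV. count_list w i)" by (rule sum_count_set[symmetric]) auto
  then show ?thesis by (simp add: abelianisation_def)
qed

lemma mat_col: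
  fixes M :: "real^'n^'n"
  shows "M *v abelianisation [x] = (\<chi> i. M $ i $ x)"
proof -
  have "(\<Sum>j\<in>UNIV. M $ i $ j * (if x = j then 1 else 0)) = M $ i $ x" for i
    by (simp add: if_distrib cong: if_cong)
  then show ?thesis by (simp add: vec_eq_iff matrix_vector_mult_def abel_single_nth)
qed

locale rs =
  fixes \<theta> :: "'a::finite \<Rightarrow> 'a list set"
  assumes rs: "is_random_substitution \<theta>"
    and sc: "semi_compatible \<theta>"
begin

abbreviation "M \<equiv> subst_matrix \<theta>"
abbreviation "q \<equiv> log_card_vector \<theta>"

definition y :: "nat \<Rightarrow> 'a \<Rightarrow> real^'a" where
  "y j a = ((\<lambda>x. M *v x) ^^ j) (abelianisation [a])"

lemma fin: "finite (\<theta> a)" and ne: "\<theta> a \<noteq> {}" and nonempty_word: "u \<in> \<theta> a \<Longrightarrow> u \<noteq> []"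
  using rs by (auto simp: is_random_substitution_def)

lemma abel_theta: assumes "w \<in> \<theta> x" shows "abelianisation w = M *v abelianisation [x]"
proof -
  let ?u = "SOME u. u \<in> \<theta> x"
  have u: "?u \<in> \<theta> x" using ne[of x] by (simp add: some_in_eq)
  have "abelianisation w = abelianisation ?u" using sc assms u unfolding semi_compatible_def by blast
  then show ?thesis unfolding mat_col by (simp add: vec_eq_iff subst_matrix_def abelianisation_def)
qed

lemma abel_subst_word: "w \<in> subst_word \<theta> u \<Longrightarrow> abelianisation w = M *v abelianisation u"
proof (induction u arbitrary: w)
  case Nil then show ?case by (simp add: abel_Nil)
next
  case (Cons x u)
  then obtain w1 w2 where w: "w = w1 @ w2" "w1 \<in> \<theta> x" "w2 \<in> subst_word \<theta> u" by auto
  have "abelianisation w = M *v abelianisation [x] + M *v abelianisation u"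
    using w Cons.IH abel_theta by (simp add: abel_append)
  also have "\<dots> = M *v abelianisation (x # u)"
    using abel_append[of "[x]" u] by (simp add: matrix_vector_right_distrib)
  finally show ?case .
qed

lemma abel_subst_pow: "w \<in> subst_pow \<theta> j a \<Longrightarrow> abelianisation w = y j a"
proof (induction j arbitrary: w)
  case 0 then show ?case by (simp add: subst_pow_def y_def)
next
  case (Suc j)
  then obtain u where "u \<in> subst_pow \<theta> j a" "w \<in> subst_word \<theta> u" by (auto simp: subst_pow_Suc)
  then show ?case using Suc.IH abel_subst_word by (simp add: y_def)
qed

lemma card_theta: "real (card (\<theta> x)) = exp (q $ x)"
proof -
  have "card (\<theta> x) > 0" using fin ne by (simp add: card_gt_0_iff)
  then show ?thesis by (simp add: log_card_vector_def)
qed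

lemma q_nonneg: "q $ x \<ge> 0"
proof -
  have "card (\<theta> x) \<ge> 1" using fin ne by (simp add: Suc_le_eq card_gt_0_iff)
  then show ?thesis by (simp add: log_card_vector_def)
qed

lemma card_subst_word: "real (card (subst_word \<theta> u)) \<le> exp (q \<bullet> abelianisation u)"
proof (induction u)
  case Nil then show ?case by (simp add: abel_Nil)
next
  case (Cons x u)
  have "real (card (subst_word \<theta> (x # u))) \<le> real (card (\<theta> x)) * real (card (subst_word \<theta> u))"
    using card_subst_word_Cons[of \<theta> x u] fin by (simp del: subst_word.simps) (metis of_nat_le_iff of_nat_mult)
  also have "\<dots> \<le> exp (q $ x) * exp (q \<bullet> abelianisation u)"
    using Cons card_theta by (simp add: mult_left_mono)
  also have "\<dots> = exp (q \<bullet> abelianisation (x # u))"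
  proof -
    have "q \<bullet> abelianisation [x] = q $ x"
      by (simp add: inner_vec_def abel_single_nth if_distrib cong: if_cong)
    then show ?thesis using abel_append[of "[x]" u]
      by (simp add: inner_add_right exp_add)
  qed
  finally show ?case .
qed

lemma card_subst_pow: "real (card (subst_pow \<theta> j a)) \<le> exp (\<Sum>i<j. q \<bullet> y i a)"
proof (induction j)
  case 0 then show ?case by (simp add: subst_pow_def)
next
  case (Suc j)
  have fS: "finite (subst_pow \<theta> j a)" by (rule finite_subst_pow) (rule fin)
  have "real (card (subst_pow \<theta> (Suc j) a)) \<le> real (\<Sum>u\<in>subst_pow \<theta> j a. card (subst_word \<theta> u))"
  proof -
    have "card (subst_pow \<theta> (Suc j) a) \<le> (\<Sum>u\<in>subst_pow \<theta> j a. card (subst_word \<theta> u))"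
      unfolding subst_pow_Suc by (rule card_UN_le[OF fS])
    then show ?thesis by (simp only: of_nat_le_iff)
  qed
  also have "\<dots> = (\<Sum>u\<in>subst_pow \<theta> j a. real (card (subst_word \<theta> u)))" by (rule of_nat_sum)
  also have "\<dots> \<le> (\<Sum>u\<in>subst_pow \<theta> j a. exp (q \<bullet> y j a))"
  proof (rule sum_mono)
    fix u assume "u \<in> subst_pow \<theta> j a"
    then show "real (card (subst_word \<theta> u)) \<le> exp (q \<bullet> y j a)"
      using card_subst_word[of u] abel_subst_pow[of u j a] by simp
  qed
  also have "\<dots> = real (card (subst_pow \<theta> j a)) * exp (q \<bullet> y j a)" by simp
  also have "\<dots> \<le> exp (\<Sum>i<j. q \<bullet> y i a) * exp (q \<bullet> y j a)"
    using Suc by (simp add: mult_right_mono)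
  also have "\<dots> = exp (\<Sum>i<Suc j. q \<bullet> y i a)" by (simp add: exp_add)
  finally show ?case .
qed

lemma length_subst_pow: "w \<in> subst_pow \<theta> j a \<Longrightarrow> real (length w) = (\<Sum>i\<in>UNIV. y j a $ i)"
  using length_abel[of w] abel_subst_pow[of w j a] by simp

end


definition rho :: "real^'n \<Rightarrow> real^'n::finite \<Rightarrow> real" where
  "rho R x = Max (range (\<lambda>i. x$i / R$i))"
definition sig :: "real^'n \<Rightarrow> real^'n::finite \<Rightarrow> real" where
  "sig R x = Min (range (\<lambda>i. x$i / R$i))"

context
  fixes R :: "real^'n::finite"
  assumes Rpos: "\<And>i. R$i > 0"
begin

lemma rho_ge: "x$i \<le> rho R x * R$i"
proof -
  have "x$i / R$i \<le> rho R x" unfolding rho_def by (rule Max_ge) auto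
  then show ?thesis using Rpos[of i] by (simp add: divide_le_eq)
qed

lemma sig_le: "sig R x * R$i \<le> x$i"
proof -
  have "sig R x \<le> x$i / R$i" unfolding sig_def by (rule Min_le) auto
  then show ?thesis using Rpos[of i] by (simp add: le_divide_eq)
qed

lemma rho_le: assumes "\<And>i. x$i \<le> c * R$i" shows "rho R x \<le> c"
  unfolding rho_def
proof (subst Max_le_iff, auto)
  fix i show "x$i / R$i \<le> c" using assms[of i] Rpos[of i] by (simp add: divide_le_eq)
qed

lemma sig_ge: assumes "\<And>i. c * R$i \<le> x$i" shows "c \<le> sig R x"
  unfolding sig_def
proof (subst Min_ge_iff, auto)
  fix i show "c \<le> x$i / R$i" using assms[of i] Rpos[of i] by (simp add: le_divide_eq)
qed

lemma sig_le_rho: "sig R x \<le> rho R x"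
proof -
  have "sig R x * R$i \<le> rho R x * R$i" for i using sig_le rho_ge order_trans by blast
  then show ?thesis using Rpos by (meson mult_le_cancel_right_pos)
qed

lemma sig_pos: assumes "\<And>i. x$i > 0" shows "sig R x > 0"
  unfolding sig_def by (subst Min_gr_iff) (auto intro: divide_pos_pos assms Rpos)

lemma mat_rho:
  fixes A :: "real^'n^'n"
  assumes Ann: "\<And>i j. A$i$j \<ge> 0" and AR: "A *v R = \<mu> *s R"
  shows "rho R (A *v x) \<le> \<mu> * rho R x"
proof (rule rho_le)
  fix i
  have "(A *v x)$i = (\<Sum>j\<in>UNIV. A$i$j * x$j)" by (simp add: matrix_vector_mult_def)
  also have "\<dots> \<le> (\<Sum>j\<in>UNIV. A$i$j * (rho R x * R$j))"
    by (rule sum_mono) (simp add: mult_left_mono Ann rho_ge)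
  also have "\<dots> = rho R x * (A *v R)$i"
    by (simp add: matrix_vector_mult_def sum_distrib_left algebra_simps)
  also have "\<dots> = \<mu> * rho R x * R$i" using AR by (simp add: vec_eq_iff)
  finally show "(A *v x)$i \<le> \<mu> * rho R x * R$i" .
qed

lemma mat_sig:
  fixes A :: "real^'n^'n"
  assumes Ann: "\<And>i j. A$i$j \<ge> 0" and AR: "A *v R = \<mu> *s R"
  shows "\<mu> * sig R x \<le> sig R (A *v x)"
proof (rule sig_ge)
  fix i
  have "\<mu> * sig R x * R$i = sig R x * (A *v R)$i" using AR by (simp add: vec_eq_iff)
  also have "\<dots> = (\<Sum>j\<in>UNIV. A$i$j * (sig R x * R$j))"
    by (simp add: matrix_vector_mult_def sum_distrib_left algebra_simps)
  also have "\<dots> \<le> (\<Sum>j\<in>UNIV. A$i$j * x$j)"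
    by (rule sum_mono) (simp add: mult_left_mono Ann sig_le)
  also have "\<dots> = (A *v x)$i" by (simp add: matrix_vector_mult_def)
  finally show "\<mu> * sig R x * R$i \<le> (A *v x)$i" .
qed

lemma contract:
  fixes P :: "real^'n^'n"
  assumes Pnn: "\<And>i j. P$i$j \<ge> 0" and PR: "P *v R = \<mu> *s R"
    and Rsum: "(\<Sum>i\<in>UNIV. R$i) = 1"
    and beta: "\<And>i j. \<beta> * R$i \<le> P$i$j" and b0: "\<beta> \<ge> 0"
  shows "rho R (P *v x) - sig R (P *v x) \<le> (\<mu> - \<beta>) * (rho R x - sig R x)"
proof -
  define S where "S = (\<Sum>j\<in>UNIV. x$j)"
  let ?r = "rho R x" and ?s = "sig R x"
  have low: "R$i * (?s * \<mu> + \<beta> * (S - ?s)) \<le> (P *v x)$i" for i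
  proof -
    have "(P *v x)$i = (\<Sum>j\<in>UNIV. P$i$j * (?s * R$j)) + (\<Sum>j\<in>UNIV. P$i$j * (x$j - ?s * R$j))"
      by (simp add: matrix_vector_mult_def sum.distrib[symmetric] algebra_simps)
    also have "(\<Sum>j\<in>UNIV. P$i$j * (?s * R$j)) = ?s * (P *v R)$i"
      by (simp add: matrix_vector_mult_def sum_distrib_left algebra_simps)
    also have "\<dots> = ?s * \<mu> * R$i" using PR by (simp add: vec_eq_iff)
    also have "(\<Sum>j\<in>UNIV. P$i$j * (x$j - ?s * R$j)) \<ge> (\<Sum>j\<in>UNIV. \<beta> * R$i * (x$j - ?s * R$j))"
      by (rule sum_mono) (rule mult_right_mono[OF beta], simp add: sig_le)
    moreover have "(\<Sum>j\<in>UNIV. \<beta> * R$i * (x$j - ?s * R$j)) = \<beta> * R$i * (S - ?s)"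
    proof -
      have "(\<Sum>j\<in>UNIV. \<beta> * R$i * (x$j - ?s * R$j)) = \<beta> * R$i * (\<Sum>j\<in>UNIV. x$j - ?s * R$j)"
        by (simp add: sum_distrib_left)
      also have "(\<Sum>j\<in>UNIV. x$j - ?s * R$j) = S - ?s * (\<Sum>j\<in>UNIV. R$j)"
        by (simp add: S_def sum_subtractf sum_distrib_left)
      finally show ?thesis using Rsum by simp
    qed
    ultimately show ?thesis by (simp add: algebra_simps)
  qed
  have up: "(P *v x)$i \<le> R$i * (?r * \<mu> - \<beta> * (?r - S))" for i
  proof -
    have "(P *v x)$i = (\<Sum>j\<in>UNIV. P$i$j * (?r * R$j)) - (\<Sum>j\<in>UNIV. P$i$j * (?r * R$j - x$j))"
      by (simp add: matrix_vector_mult_def sum_subtractf[symmetric] algebra_simps)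
    also have "(\<Sum>j\<in>UNIV. P$i$j * (?r * R$j)) = ?r * (P *v R)$i"
      by (simp add: matrix_vector_mult_def sum_distrib_left algebra_simps)
    also have "\<dots> = ?r * \<mu> * R$i" using PR by (simp add: vec_eq_iff)
    also have "(\<Sum>j\<in>UNIV. P$i$j * (?r * R$j - x$j)) \<ge> (\<Sum>j\<in>UNIV. \<beta> * R$i * (?r * R$j - x$j))"
      by (rule sum_mono) (rule mult_right_mono[OF beta], simp add: rho_ge)
    moreover have "(\<Sum>j\<in>UNIV. \<beta> * R$i * (?r * R$j - x$j)) = \<beta> * R$i * (?r - S)"
    proof -
      have "(\<Sum>j\<in>UNIV. \<beta> * R$i * (?r * R$j - x$j)) = \<beta> * R$i * (\<Sum>j\<in>UNIV. ?r * R$j - x$j)"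
        by (simp add: sum_distrib_left)
      also have "(\<Sum>j\<in>UNIV. ?r * R$j - x$j) = ?r * (\<Sum>j\<in>UNIV. R$j) - S"
        by (simp add: S_def sum_subtractf sum_distrib_left)
      finally show ?thesis using Rsum by simp
    qed
    ultimately show ?thesis by (simp add: algebra_simps)
  qed
  have "sig R (P *v x) \<ge> ?s * \<mu> + \<beta> * (S - ?s)"
    by (rule sig_ge) (use low in \<open>simp add: mult.commute\<close>)
  moreover have "rho R (P *v x) \<le> ?r * \<mu> - \<beta> * (?r - S)"
    by (rule rho_le) (use up in \<open>simp add: mult.commute\<close>)
  ultimately show ?thesis by (simp add: algebra_simps)
qed

end


lemma pow_big: fixes lam :: real assumes "lam > 1" shows "\<exists>N. \<forall>p\<ge>N. X \<le> lam ^ p"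
proof -
  obtain n where "X < lam ^ n" using real_arch_pow[OF assms] by blast
  then show ?thesis using power_increasing[of n _ lam] assms by (meson less_eq_real_def order_trans)
qed

locale pf0 =
  fixes M :: "real^'n::finite^'n" and R :: "real^'n" and lam :: real and k :: nat
  assumes Mnn: "\<And>i j. M$i$j \<ge> 0" and eig: "M *v R = lam *s R" and Rnn: "\<And>i. R$i \<ge> 0"
    and Rsum: "(\<Sum>i\<in>UNIV. R$i) = 1" and kpos: "k > 0"
    and Ppos: "\<And>i j. mat_pow M k $ i $ j > 0"
begin

abbreviation "f \<equiv> (\<lambda>x. M *v x)"
abbreviation "P \<equiv> mat_pow M k"

lemma matpow_vec: "mat_pow M j *v x = (f ^^ j) x"
proof (induction j arbitrary: x)
  case 0 then show ?case by (simp add: mat_pow_def)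
next
  case (Suc j)
  have "mat_pow M (Suc j) = mat_pow M j ** M" by (simp add: mat_pow_def)
  then have "mat_pow M (Suc j) *v x = mat_pow M j *v (M *v x)" by (simp add: matrix_vector_mul_assoc)
  also have "\<dots> = (f ^^ j) (M *v x)" by (rule Suc)
  also have "\<dots> = (f ^^ Suc j) x" by (simp only: funpow_Suc_right o_apply)
  finally show ?case .
qed

lemma iterR: "(f ^^ j) R = lam ^ j *s R"
  by (induction j) (auto simp: eig matrix_vector_mult_scaleR vector_smult_assoc scalar_mult_eq_scaleR)

lemma PR: "P *v R = lam ^ k *s R" using matpow_vec iterR by simp

lemma Pnn: "P $ i $ j \<ge> 0" using Ppos less_imp_le by blast


lemma Rpos: "R $ i > 0"
proof -
  obtain j where j: "R $ j > 0"
  proof (rule ccontr)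
    assume "\<not> thesis"
    then have "R $ j = 0" for j using that[of j] Rnn[of j] by linarith
    then show False using Rsum by simp
  qed
  have "0 < P$i$j * R$j" using Ppos j by simp
  also have "\<dots> \<le> (\<Sum>l\<in>UNIV. P$i$l * R$l)"
    by (rule member_le_sum) (auto intro: mult_nonneg_nonneg Pnn Rnn)
  also have "\<dots> = lam ^ k * R $ i" using PR by (simp add: matrix_vector_mult_def vec_eq_iff)
  finally have "0 < lam ^ k * R $ i" .
  then show ?thesis using Rnn[of i] by (cases "R $ i = 0") auto
qed

end

locale pf = pf0 M R lam k for M :: "real^'n::finite^'n" and R lam k + assumes lam1: "lam > 1"
begin

lemma lam_pos: "lam > 0" using lam1 by simp

definition "beta = Min (range (\<lambda>(i,j). P$i$j / R$i))"

lemma beta_pos: "beta > 0"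
  unfolding beta_def by (subst Min_gr_iff) (auto intro!: divide_pos_pos Ppos Rpos)

lemma beta_le: "beta * R$i \<le> P$i$j"
proof -
  have "beta \<le> P$i$j / R$i" unfolding beta_def by (rule Min_le) auto
  then show ?thesis using Rpos[of i] by (simp add: le_divide_eq)
qed

lemma beta_le_mu: "beta \<le> lam ^ k"
proof -
  obtain i :: 'n where True by blast
  have "beta * R$i = (\<Sum>j\<in>UNIV. beta * R$i * R$j)" using Rsum by (simp add: sum_distrib_left[symmetric])
  also have "\<dots> \<le> (\<Sum>j\<in>UNIV. P$i$j * R$j)"
    by (rule sum_mono) (rule mult_right_mono[OF beta_le Rnn])
  also have "\<dots> = lam ^ k * R $ i" using PR by (simp add: matrix_vector_mult_def vec_eq_iff)
  finally show ?thesis using Rpos[of i] by simp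
qed

definition "xs x0 j = (f ^^ j) x0"
definition "r x0 j = rho R (xs x0 j)"
definition "s x0 j = sig R (xs x0 j)"
definition "D x0 j = (r x0 j - s x0 j) / lam ^ j"

lemma xs_Suc: "xs x0 (Suc j) = M *v xs x0 j" by (simp add: xs_def)
lemma xs_k: "xs x0 (j + k) = P *v xs x0 j"
  unfolding xs_def add.commute[of j k] funpow_add matpow_vec by simp

lemma r_Suc: "r x0 (Suc j) \<le> lam * r x0 j"
  unfolding r_def xs_Suc by (rule mat_rho[OF Rpos Mnn eig])
lemma s_Suc: "lam * s x0 j \<le> s x0 (Suc j)"
  unfolding s_def xs_Suc by (rule mat_sig[OF Rpos Mnn eig])

lemma D_nonneg: "D x0 j \<ge> 0"
  unfolding D_def r_def s_def using sig_le_rho[OF Rpos] lam_pos by simp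

lemma D_Suc: "D x0 (Suc j) \<le> D x0 j"
proof -
  have "r x0 (Suc j) - s x0 (Suc j) \<le> lam * (r x0 j - s x0 j)"
    using r_Suc[of x0 j] s_Suc[of x0 j] by (simp add: algebra_simps)
  then show ?thesis unfolding D_def using lam_pos
    by (simp add: divide_simps) (simp add: algebra_simps)
qed

lemma D_mono: "j \<le> j' \<Longrightarrow> D x0 j' \<le> D x0 j"
  using lift_Suc_antimono_le[of "D x0"] D_Suc by blast

lemma s_scaled_mono: "j \<le> p \<Longrightarrow> s x0 j / lam ^ j \<le> s x0 p / lam ^ p"
proof -
  have "s x0 n / lam ^ n \<le> s x0 (Suc n) / lam ^ Suc n" for n
    using s_Suc[of x0 n] lam_pos by (simp add: divide_simps) (simp add: algebra_simps)
  then show "j \<le> p \<Longrightarrow> ?thesis" using lift_Suc_mono_le[of "\<lambda>n. s x0 n / lam ^ n"] by blast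
qed

definition "rr = (lam ^ k - beta) / lam ^ k"

lemma rr: "0 \<le> rr" "rr < 1"
  using beta_pos beta_le_mu lam_pos by (auto simp: rr_def)

lemma D_k: "D x0 (j + k) \<le> rr * D x0 j"
proof -
  have "r x0 (j+k) - s x0 (j+k) \<le> (lam ^ k - beta) * (r x0 j - s x0 j)"
    unfolding r_def s_def xs_k
    by (rule contract[OF Rpos Pnn PR Rsum beta_le less_imp_le[OF beta_pos]])
  then show ?thesis unfolding D_def rr_def using lam_pos
    by (simp add: divide_simps power_add)
qed

lemma D_ik: "D x0 (i * k) \<le> rr ^ i * D x0 0"
proof (induction i)
  case 0 then show ?case by simp
next
  case (Suc i)
  have "D x0 (Suc i * k) = D x0 (i * k + k)" by (simp add: add.commute)
  also have "\<dots> \<le> rr * D x0 (i * k)" by (rule D_k)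
  also have "\<dots> \<le> rr * (rr ^ i * D x0 0)" using Suc rr by (simp add: mult_left_mono)
  finally show ?case by simp
qed

lemma D_small: assumes "\<delta> > 0" shows "\<exists>J. \<forall>j\<ge>J. D x0 j \<le> \<delta>"
proof -
  have "(\<lambda>i. rr ^ i * D x0 0) \<longlonglongrightarrow> 0 * D x0 0"
    by (intro tendsto_intros) (use rr in auto)
  then have "\<forall>\<^sub>F i in sequentially. rr ^ i * D x0 0 < \<delta>" using assms by (auto intro: order_tendstoD(2))
  then obtain i where "rr ^ i * D x0 0 < \<delta>" by (auto simp: eventually_sequentially)
  then show ?thesis using D_ik[of x0 i] D_mono[of "i*k" _ x0] by (meson order_trans less_imp_le)
qed

lemma gamma: assumes x0pos: "\<And>i. (P *v x0)$i > 0" shows "\<exists>\<gamma>>0. \<forall>p\<ge>k. \<gamma> * lam ^ p \<le> s x0 p"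
proof -
  have "xs x0 k = P *v x0" using xs_k[of x0 0] by (simp add: xs_def)
  then have sk: "s x0 k > 0" unfolding s_def using sig_pos[OF Rpos] x0pos by metis
  define \<gamma> where "\<gamma> = s x0 k / lam ^ k"
  have "\<gamma> > 0" using sk lam_pos by (simp add: \<gamma>_def)
  moreover have "\<gamma> * lam ^ p \<le> s x0 p" if "p \<ge> k" for p
    using s_scaled_mono[OF that, of x0] lam_pos by (simp add: \<gamma>_def divide_simps)
  ultimately show ?thesis by blast
qed

lemma len_ge_s: "s x0 p \<le> (\<Sum>i\<in>UNIV. xs x0 p $ i)"
proof -
  have "s x0 p = (\<Sum>i\<in>UNIV. s x0 p * R $ i)" using Rsum by (simp add: sum_distrib_left[symmetric])
  also have "\<dots> \<le> (\<Sum>i\<in>UNIV. xs x0 p $ i)" unfolding s_def by (rule sum_mono) (rule sig_le[OF Rpos])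
  finally show ?thesis .
qed

lemma qx_le: assumes qnn: "\<And>i. q$i \<ge> 0" shows "q \<bullet> xs x0 j \<le> r x0 j * (q \<bullet> R)"
proof -
  have "q \<bullet> xs x0 j = (\<Sum>i\<in>UNIV. q$i * xs x0 j $ i)" by (simp add: inner_vec_def)
  also have "\<dots> \<le> (\<Sum>i\<in>UNIV. q$i * (r x0 j * R$i))"
    unfolding r_def by (rule sum_mono) (rule mult_left_mono[OF rho_ge[OF Rpos] qnn])
  also have "\<dots> = r x0 j * (q \<bullet> R)" by (simp add: inner_vec_def sum_distrib_left algebra_simps)
  finally show ?thesis .
qed

lemma geom_le: "(\<Sum>j<p. lam ^ j) \<le> lam ^ p / (lam - 1)"
proof -
  have "(\<Sum>j<p. lam ^ j) = (1 - lam ^ p) / (1 - lam)" using sum_gp_strict[of lam p] lam1 by simp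
  also have "\<dots> = (lam ^ p - 1) / (lam - 1)" by (simp add: divide_simps) (simp add: algebra_simps)
  also have "\<dots> \<le> lam ^ p / (lam - 1)" using lam1 by (simp add: divide_right_mono)
  finally show ?thesis .
qed

lemma main_bound:
  assumes x0pos: "\<And>i. (P *v x0)$i > 0" and qnn: "\<And>i. q$i \<ge> 0" and eta: "\<eta> > 0"
  shows "\<exists>N. \<forall>p\<ge>N. (\<Sum>j<p. q \<bullet> xs x0 j) \<le> (q \<bullet> R / (lam - 1) + \<eta>) * (\<Sum>i\<in>UNIV. xs x0 p $ i)"
proof -
  define A where "A = q \<bullet> R"
  have A0: "A \<ge> 0" unfolding A_def inner_vec_def by (auto intro!: sum_nonneg mult_nonneg_nonneg qnn Rnn)
  obtain \<gamma> where g0: "\<gamma> > 0" and g: "\<And>p. p \<ge> k \<Longrightarrow> \<gamma> * lam ^ p \<le> s x0 p" using gamma[OF x0pos] by blast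
  define \<delta> where "\<delta> = \<eta> * \<gamma> * (lam - 1) / (2 * (A + 1))"
  have d0: "\<delta> > 0" unfolding \<delta>_def using eta g0 lam1 A0 by simp
  have Ad: "A * \<delta> / (lam - 1) \<le> \<eta> * \<gamma> / 2"
  proof -
    have l: "lam - 1 > 0" "A + 1 > 0" using lam1 A0 by auto
    have "\<delta> / (lam - 1) = \<eta> * \<gamma> / (2 * (A + 1))"
      unfolding \<delta>_def using l by (simp add: divide_simps)
    then have "A * \<delta> / (lam - 1) = \<eta> * \<gamma> / 2 * (A / (A + 1))"
      by (metis times_divide_eq_right times_divide_times_eq mult.commute divide_divide_eq_left)
    also have "\<dots> \<le> \<eta> * \<gamma> / 2 * 1" using eta g0 A0 by (intro mult_left_mono) auto
    finally show ?thesis by simp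
  qed
  obtain J where J: "\<And>j. j \<ge> J \<Longrightarrow> D x0 j \<le> \<delta>" using D_small[OF d0] by blast
  define CJ where "CJ = (\<Sum>j<J. lam ^ j * D x0 j)"
  obtain N1 where N1: "\<And>p. p \<ge> N1 \<Longrightarrow> 2 * A * CJ / (\<eta> * \<gamma>) \<le> lam ^ p" using pow_big[OF lam1] by blast
  have "(\<Sum>j<p. q \<bullet> xs x0 j) \<le> (A / (lam - 1) + \<eta>) * (\<Sum>i\<in>UNIV. xs x0 p $ i)"
    if p: "p \<ge> max (max J k) N1" for p
  proof -
    have sp0: "s x0 p \<ge> 0" using g[of p] p g0 lam_pos by (meson max.boundedE mult_pos_pos zero_less_power less_imp_le order_trans)
    have rj: "r x0 j \<le> lam ^ j * (s x0 p / lam ^ p) + lam ^ j * D x0 j" if "j < p" for j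
    proof -
      have "s x0 j / lam ^ j \<le> s x0 p / lam ^ p" using s_scaled_mono[of j p x0] that by simp
      then have "s x0 j \<le> lam ^ j * (s x0 p / lam ^ p)" using lam_pos by (simp add: divide_le_eq mult.commute)
      moreover have "r x0 j = s x0 j + lam ^ j * D x0 j" using lam_pos by (simp add: D_def)
      ultimately show ?thesis by simp
    qed
    have sumD: "(\<Sum>j<p. lam ^ j * D x0 j) \<le> CJ + \<delta> * (\<Sum>j<p. lam ^ j)"
    proof -
      have Jp: "J \<le> p" using p by simp
      have split: "(\<Sum>j<p. lam ^ j * D x0 j) = CJ + (\<Sum>j\<in>{J..<p}. lam ^ j * D x0 j)"
        unfolding CJ_def using Jp by (metis atLeast0LessThan sum.atLeastLessThan_concat zero_le)
      have "(\<Sum>j\<in>{J..<p}. lam ^ j * D x0 j) \<le> (\<Sum>j\<in>{J..<p}. \<delta> * lam ^ j)"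
        by (rule sum_mono) (use J lam_pos in \<open>simp add: mult.commute mult_left_mono\<close>)
      also have "\<dots> \<le> (\<Sum>j<p. \<delta> * lam ^ j)"
        by (rule sum_mono2) (use d0 lam_pos in auto)
      finally show ?thesis using split by (simp add: sum_distrib_left)
    qed
    have "(\<Sum>j<p. q \<bullet> xs x0 j) \<le> (\<Sum>j<p. r x0 j * A)"
      by (rule sum_mono) (use qx_le[OF qnn] in \<open>simp add: A_def\<close>)
    also have "\<dots> \<le> (\<Sum>j<p. (lam ^ j * (s x0 p / lam ^ p) + lam ^ j * D x0 j) * A)"
      by (rule sum_mono) (use rj A0 in \<open>simp add: mult_right_mono\<close>)
    also have "\<dots> = A * ((s x0 p / lam ^ p) * (\<Sum>j<p. lam ^ j) + (\<Sum>j<p. lam ^ j * D x0 j))"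
      by (simp add: sum.distrib sum_distrib_left sum_distrib_right sum_divide_distrib algebra_simps)
    also have "\<dots> \<le> A * ((s x0 p / lam ^ p) * (lam ^ p / (lam - 1)) + (CJ + \<delta> * (lam ^ p / (lam - 1))))"
    proof (rule mult_left_mono[OF _ A0], rule add_mono)
      show "s x0 p / lam ^ p * (\<Sum>j<p. lam ^ j) \<le> s x0 p / lam ^ p * (lam ^ p / (lam - 1))"
        using geom_le sp0 lam_pos by (intro mult_left_mono) auto
      show "(\<Sum>j<p. lam ^ j * D x0 j) \<le> CJ + \<delta> * (lam ^ p / (lam - 1))"
        using sumD geom_le[of p] d0 by (smt (verit) mult_left_mono)
    qed
    also have "\<dots> = A / (lam - 1) * s x0 p + A * CJ + A * \<delta> / (lam - 1) * lam ^ p"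
    proof -
      have "(s x0 p / lam ^ p) * (lam ^ p / (lam - 1)) = s x0 p / (lam - 1)"
        using lam_pos by simp
      then show ?thesis by (simp add: algebra_simps)
    qed
    also have "\<dots> \<le> A / (lam - 1) * s x0 p + \<eta> * \<gamma> / 2 * lam ^ p + \<eta> * \<gamma> / 2 * lam ^ p"
    proof -
      have "A * CJ \<le> \<eta> * \<gamma> / 2 * lam ^ p"
        using N1[of p] p eta g0 by (simp add: divide_le_eq field_simps)
      moreover have "A * \<delta> / (lam - 1) * lam ^ p \<le> \<eta> * \<gamma> / 2 * lam ^ p"
        using mult_right_mono[OF Ad, of "lam ^ p"] lam_pos by simp
      ultimately show ?thesis by linarith
    qed
    also have "\<dots> \<le> A / (lam - 1) * s x0 p + \<eta> * s x0 p"
      using g[of p] p eta by (simp add: algebra_simps mult_left_mono[of _ _ \<eta>, OF _ less_imp_le[OF eta], simplified])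
    also have "\<dots> = (A / (lam - 1) + \<eta>) * s x0 p" by (simp add: algebra_simps)
    also have "\<dots> \<le> (A / (lam - 1) + \<eta>) * (\<Sum>i\<in>UNIV. xs x0 p $ i)"
      using len_ge_s A0 lam1 eta by (intro mult_left_mono) auto
    finally show ?thesis .
  qed
  then show ?thesis unfolding A_def by blast
qed

lemma len_big:
  assumes x0pos: "\<And>i. (P *v x0)$i > 0"
  shows "\<exists>N. \<forall>p\<ge>N. B \<le> (\<Sum>i\<in>UNIV. xs x0 p $ i)"
proof -
  obtain \<gamma> where g0: "\<gamma> > 0" and g: "\<And>p. p \<ge> k \<Longrightarrow> \<gamma> * lam ^ p \<le> s x0 p" using gamma[OF x0pos] by blast
  obtain N1 where N1: "\<And>p. p \<ge> N1 \<Longrightarrow> B / \<gamma> \<le> lam ^ p" using pow_big[OF lam1] by blast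
  have "B \<le> (\<Sum>i\<in>UNIV. xs x0 p $ i)" if "p \<ge> max k N1" for p
  proof -
    have "B \<le> \<gamma> * lam ^ p" using N1[of p] that g0 by (simp add: divide_le_eq mult.commute)
    also have "\<dots> \<le> s x0 p" using g that by simp
    also have "\<dots> \<le> (\<Sum>i\<in>UNIV. xs x0 p $ i)" by (rule len_ge_s)
    finally show ?thesis .
  qed
  then show ?thesis by blast
qed

end


lemma card_sw_L:
  assumes fin: "\<And>a. finite (\<tau> a)" and ct: "\<And>a. real (card (\<tau> a)) \<le> exp (C * real (L a))"
  shows "real (card (subst_word \<tau> u)) \<le> exp (C * real (sum_list (map L u)))"
proof (induction u)
  case Nil then show ?case by simp
next
  case (Cons x u)
  have "real (card (subst_word \<tau> (x # u))) \<le> real (card (\<tau> x)) * real (card (subst_word \<tau> u))"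
    using card_subst_word_Cons[of \<tau> x u, OF fin] by (metis of_nat_le_iff of_nat_mult)
  also have "\<dots> \<le> exp (C * real (L x)) * exp (C * real (sum_list (map L u)))"
    using Cons ct[of x] by (intro mult_mono) auto
  also have "\<dots> = exp (C * real (sum_list (map L (x # u))))"
    by (simp add: exp_add[symmetric] algebra_simps)
  finally show ?case .
qed

lemma cover1:
  assumes Mx: "\<And>a w. w \<in> \<tau> a \<Longrightarrow> length w \<le> Mx"
  shows "x \<in> subst_word \<tau> u \<Longrightarrow> x = Pr @ y \<Longrightarrow> y \<noteq> [] \<Longrightarrow>
    \<exists>u1 x1 d. x1 \<in> subst_word \<tau> u1 \<and> d < Mx \<and> drop d x1 = y"
proof (induction u arbitrary: x Pr)
  case Nil then show ?case by simp
next
  case (Cons a us)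
  then obtain b x2 where bx: "x = b @ x2" "b \<in> \<tau> a" "x2 \<in> subst_word \<tau> us" by auto
  show ?case
  proof (cases "length Pr < length b")
    case True
    have "length b \<le> Mx" using Mx bx by blast
    then show ?thesis using Cons.prems True by (intro exI[of _ "a # us"] exI[of _ x] exI[of _ "length Pr"]) auto
  next
    case False
    then obtain Pr' where "Pr = b @ Pr'" "x2 = Pr' @ y"
      using Cons.prems bx by (auto simp: append_eq_append_conv2)
    then show ?thesis using Cons.IH bx Cons.prems by blast
  qed
qed

lemma cover2:
  assumes Mx: "\<And>a w. w \<in> \<tau> a \<Longrightarrow> length w \<le> Mx"
  shows "x \<in> subst_word \<tau> u \<Longrightarrow> x = y @ Sf \<Longrightarrow>
    \<exists>u2 x2 Sf'. x2 \<in> subst_word \<tau> u2 \<and> x2 = y @ Sf' \<and> length x2 \<le> length y + Mx"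
proof (induction u arbitrary: x y)
  case Nil then show ?case by (intro exI[of _ "[]"]) auto
next
  case (Cons a us)
  then obtain b x' where bx: "x = b @ x'" "b \<in> \<tau> a" "x' \<in> subst_word \<tau> us" by auto
  show ?case
  proof (cases "length y \<le> length b")
    case True
    then have "b = y @ drop (length y) b" using Cons.prems bx
      by (metis append_eq_append_conv_if append_take_drop_id)
    moreover have "b \<in> subst_word \<tau> [a]" using bx by auto
    moreover have "length b \<le> length y + Mx" using Mx bx by fastforce
    ultimately show ?thesis by blast
  next
    case False
    then obtain y' where y': "y = b @ y'" "x' = y' @ Sf"
      using Cons.prems bx by (auto simp: append_eq_append_conv2)
    then obtain u2 x2 Sf' where "x2 \<in> subst_word \<tau> u2" "x2 = y' @ Sf'" "length x2 \<le> length y' + Mx"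
      using Cons.IH bx by blast
    then show ?thesis using y' bx
      by (intro exI[of _ "a # u2"] exI[of _ "b @ x2"] exI[of _ Sf']) auto
  qed
qed

lemma cover:
  assumes Mx: "\<And>a w. w \<in> \<tau> a \<Longrightarrow> length w \<le> Mx"
    and x: "x \<in> subst_word \<tau> u" "x = Pr @ v @ Sf" and v: "v \<noteq> []"
  shows "\<exists>u2 x2 d. x2 \<in> subst_word \<tau> u2 \<and> d < Mx \<and> v = take (length v) (drop d x2)
      \<and> length x2 \<le> length v + 2 * Mx"
proof -
  obtain u1 x1 d where 1: "x1 \<in> subst_word \<tau> u1" "d < Mx" "drop d x1 = v @ Sf"
  proof -
    have "\<exists>u1 x1 d. x1 \<in> subst_word \<tau> u1 \<and> d < Mx \<and> drop d x1 = v @ Sf"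
      by (rule cover1[where \<tau>=\<tau> and Mx=Mx and Pr=Pr]) (use Mx x v in auto)
    then show ?thesis using that by blast
  qed
  have dlen: "d \<le> length x1" using 1(3) v by (metis drop_all le_cases list.size(3) Nil_is_append_conv)
  have "x1 = (take d x1 @ v) @ Sf" using 1(3) by (metis append.assoc append_take_drop_id)
  then obtain u2 x2 Sf' where 2: "x2 \<in> subst_word \<tau> u2" "x2 = (take d x1 @ v) @ Sf'"
     "length x2 \<le> length (take d x1 @ v) + Mx"
  proof -
    have "\<exists>u2 x2 Sf'. x2 \<in> subst_word \<tau> u2 \<and> x2 = (take d x1 @ v) @ Sf' \<and> length x2 \<le> length (take d x1 @ v) + Mx"
      by (rule cover2[where \<tau>=\<tau> and Mx=Mx and Sf=Sf]) (use Mx 1 \<open>x1 = (take d x1 @ v) @ Sf\<close> in auto)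
    then show ?thesis using that by blast
  qed
  have lt: "length (take d x1) = d" using dlen by simp
  have "v = take (length v) (drop d x2)" using 2(2) lt by simp
  moreover have "length x2 \<le> length v + 2 * Mx" using 2(3) lt 1(2) by simp
  ultimately show ?thesis using 1(2) 2(1) by blast
qed

lemma sum_list_ge: "(\<And>a. m \<le> L a) \<Longrightarrow> m * length u \<le> sum_list (map L u)"
  by (induction u) (auto simp: add_mono)

lemma count_W:
  fixes \<tau> :: "'a::finite \<Rightarrow> 'a list set" and L :: "'a \<Rightarrow> nat"
  assumes fin: "\<And>a. finite (\<tau> a)"
    and lent: "\<And>a w. w \<in> \<tau> a \<Longrightarrow> length w = L a"
    and m: "\<And>a. m \<le> L a" and m1: "m \<ge> 1"
    and C: "C \<ge> 0"
    and ct: "\<And>a. real (card (\<tau> a)) \<le> exp (C * real (L a))"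
  shows "real (card {take l (drop d x) | u x d. x \<in> subst_word \<tau> u \<and> d < Mx \<and> length x \<le> N})
     \<le> real Mx * (real (N div m) + 1) * real CARD('a) ^ (N div m) * exp (C * real N)"
proof -
  define K where "K = N div m"
  define U where "U = {u :: 'a list. set u \<subseteq> UNIV \<and> length u \<le> K}"
  define X where "X u = {x \<in> subst_word \<tau> u. length x \<le> N}" for u
  define T where "T = Sigma U (\<lambda>u. X u \<times> {..<Mx})"
  have finU: "finite U" unfolding U_def by (rule finite_lists_length_le) simp
  have finX: "finite (X u)" for u unfolding X_def using finite_subst_word[of \<tau> u] fin by simp
  have finT: "finite T" unfolding T_def using finU finX by auto
  have sub: "{take l (drop d x) | u x d. x \<in> subst_word \<tau> u \<and> d < Mx \<and> length x \<le> N}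
      \<subseteq> (\<lambda>(u,(x,d)). take l (drop d x)) ` T"
  proof
    fix v assume "v \<in> {take l (drop d x) | u x d. x \<in> subst_word \<tau> u \<and> d < Mx \<and> length x \<le> N}"
    then obtain u x d where v: "v = take l (drop d x)" "x \<in> subst_word \<tau> u" "d < Mx" "length x \<le> N" by blast
    have "length x = sum_list (map L u)" by (rule length_subst_word[OF lent v(2)])
    then have "length u * m \<le> N" using sum_list_ge[of m L u, OF m] v(4) by (simp add: mult.commute)
    then have "length u \<le> K" unfolding K_def using m1 by (simp add: less_eq_div_iff_mult_less_eq)
    then have "(u, (x, d)) \<in> T" unfolding T_def U_def X_def using v by auto
    then show "v \<in> (\<lambda>(u,(x,d)). take l (drop d x)) ` T" using v(1) by force
  qed
  have cX: "real (card (X u)) \<le> exp (C * real N)" for u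
  proof (cases "X u = {}")
    case True then show ?thesis by simp
  next
    case False
    then obtain x where x: "x \<in> subst_word \<tau> u" "length x \<le> N" unfolding X_def by auto
    have "real (card (X u)) \<le> real (card (subst_word \<tau> u))"
      unfolding X_def using finite_subst_word[of \<tau> u] fin by (simp add: card_mono)
    also have "\<dots> \<le> exp (C * real (sum_list (map L u)))" by (rule card_sw_L[OF fin ct])
    also have "sum_list (map L u) = length x" using length_subst_word[OF lent x(1)] by simp
    also have "exp (C * real (length x)) \<le> exp (C * real N)" using x(2) C by (simp add: mult_left_mono)
    finally show ?thesis .
  qed
  have "real (card {take l (drop d x) | u x d. x \<in> subst_word \<tau> u \<and> d < Mx \<and> length x \<le> N})
      \<le> real (card T)"
    using card_mono[OF finite_imageI[OF finT] sub] card_image_le[OF finT] by (meson of_nat_le_iff order_trans)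
  also have "real (card T) = (\<Sum>u\<in>U. real (card (X u)) * real Mx)"
    unfolding T_def using finU finX by (simp add: card_cartesian_product)
  also have "\<dots> \<le> (\<Sum>u\<in>U. exp (C * real N) * real Mx)"
    by (rule sum_mono) (use cX in \<open>simp add: mult_right_mono\<close>)
  also have "\<dots> = real (card U) * exp (C * real N) * real Mx" by simp
  also have "real (card U) \<le> (real K + 1) * real CARD('a) ^ K"
  proof -
    have "card U = (\<Sum>i\<le>K. CARD('a) ^ i)" unfolding U_def by (rule card_lists_length_le) simp
    also have "\<dots> \<le> (\<Sum>i\<le>K. CARD('a) ^ K)"
      by (rule sum_mono) (simp add: power_increasing Suc_leI)
    also have "\<dots> = (K + 1) * CARD('a) ^ K" by simp
    finally show ?thesis by (metis of_nat_le_iff of_nat_mult of_nat_power of_nat_Suc add.commute Suc_eq_plus1)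
  qed
  then have "real (card U) * exp (C * real N) * real Mx \<le> (real K + 1) * real CARD('a) ^ K * exp (C * real N) * real Mx"
    by (intro mult_right_mono) auto
  finally show ?thesis unfolding K_def by (simp add: algebra_simps)
qed



context rs begin

lemma sw_ne: "subst_word \<theta> u \<noteq> {}"
proof (induction u)
  case Nil then show ?case by simp
next
  case (Cons x u)
  then obtain v where "v \<in> subst_word \<theta> u" by blast
  moreover obtain w where "w \<in> \<theta> x" using ne by blast
  ultimately show ?case by auto
qed

lemma sp_ne: "subst_pow \<theta> j a \<noteq> {}"
proof (induction j)
  case 0 then show ?case by (simp add: subst_pow_def)
next
  case (Suc j) then show ?case using sw_ne by (auto simp: subst_pow_Suc)
qed

definition "cs j = (\<Sum>i\<in>UNIV. M$i$j)"

lemma cs_len: "w \<in> \<theta> j \<Longrightarrow> real (length w) = cs j"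
  using length_abel[of w] abel_theta[of w j] mat_col[of M j] by (simp add: cs_def)

lemma cs_ge1: "cs j \<ge> 1"
proof -
  obtain w where w: "w \<in> \<theta> j" using ne by blast
  then have "w \<noteq> []" by (rule nonempty_word)
  then show ?thesis using cs_len[OF w] by (cases w) auto
qed

lemma sum_Mv: "(\<Sum>i\<in>UNIV. (M *v x)$i) = (\<Sum>j\<in>UNIV. cs j * x$j)"
  unfolding matrix_vector_mult_def cs_def
  by (simp add: sum_distrib_right) (rule sum.swap)

end



theorem mainTheorem7:
  fixes \<theta> :: "'a::finite \<Rightarrow> 'a list set" and R :: "real ^ 'a" and s :: real
  assumes "is_random_substitution \<theta>"
    and "semi_compatible \<theta>"
    and "primitive_matrix (subst_matrix \<theta>)"
    and "is_right_pf_vector (subst_matrix \<theta>) R"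
    and "has_topological_entropy \<theta> s"
  shows "s \<le> (log_card_vector \<theta> \<bullet> R) / (pf_eigenvalue (subst_matrix \<theta>) - 1)"
proof -
  interpret rs \<theta> using assms(1,2) by unfold_locales
  define lam where "lam = pf_eigenvalue (subst_matrix \<theta>)"
  have Mnn: "\<And>i j. subst_matrix \<theta> $ i $ j \<ge> 0" using assms(3) by (simp add: primitive_matrix_def)
  obtain k where kpos: "k > 0" and Ppos: "\<And>i j. mat_pow (subst_matrix \<theta>) k $ i $ j > 0"
    using assms(3) by (auto simp: primitive_matrix_def)
  have eig: "subst_matrix \<theta> *v R = lam *s R" and Rnn: "\<And>i. R $ i \<ge> 0"
    and Rabs: "(\<Sum>i\<in>UNIV. \<bar>R $ i\<bar>) = 1"
    using assms(4) by (auto simp: is_right_pf_vector_def lam_def)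
  have Rsum: "(\<Sum>i\<in>UNIV. R $ i) = 1" using Rabs Rnn by simp
  interpret P0: pf0 "subst_matrix \<theta>" R lam k
    using Mnn eig Rnn Rsum kpos Ppos by unfold_locales auto
  have lam_eq: "lam = (\<Sum>j\<in>UNIV. cs j * R $ j)"
  proof -
    have "lam = (\<Sum>i\<in>UNIV. (lam *s R) $ i)" using Rsum by (simp add: sum_distrib_left[symmetric])
    also have "\<dots> = (\<Sum>i\<in>UNIV. (subst_matrix \<theta> *v R) $ i)" using eig by simp
    also have "\<dots> = (\<Sum>j\<in>UNIV. cs j * R $ j)" by (rule sum_Mv)
    finally show ?thesis .
  qed
  have diff: "lam - 1 = (\<Sum>j\<in>UNIV. (cs j - 1) * R $ j)"
    using lam_eq Rsum by (simp add: algebra_simps sum_subtractf)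
  have diff_nn: "(cs j - 1) * R $ j \<ge> 0" for j using cs_ge1[of j] Rnn[of j] by simp
  have lam_ge: "lam \<ge> 1" using diff diff_nn sum_nonneg[of UNIV "\<lambda>j. (cs j - 1) * R $ j"] by simp
  show ?thesis
  proof (cases "lam = 1")
    case True
    have cs1: "cs j = 1" for j
    proof -
      have "(\<Sum>j\<in>UNIV. (cs j - 1) * R $ j) = 0" using diff True by simp
      then have "(cs j - 1) * R $ j = 0" using sum_nonneg_eq_0_iff[of UNIV "\<lambda>j. (cs j - 1) * R $ j"] diff_nn by simp
      then show ?thesis using P0.Rpos[of j] by simp
    qed
    have ysum: "(\<Sum>i\<in>UNIV. y j a $ i) = 1" for j a
    proof (induction j)
      case 0
      show ?case using length_abel[of "[a]"] by (simp add: y_def)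
    next
      case (Suc j)
      have "y (Suc j) a = subst_matrix \<theta> *v y j a" by (simp add: y_def)
      then show ?case using sum_Mv[of "y j a"] cs1 Suc by simp
    qed
    have len1: "length w = 1" if "w \<in> subst_pow \<theta> j a" for w j a
      using length_subst_pow[OF that] ysum by simp
    have "language_len \<theta> l = {}" if "l \<ge> 2" for l
    proof (rule ccontr)
      assume "language_len \<theta> l \<noteq> {}"
      then obtain v a j w Pr Sf where "length v = l" "w \<in> subst_pow \<theta> j a" "w = Pr @ v @ Sf"
        unfolding language_len_def language_def by blast
      then show False using len1 that by fastforce
    qed
    then have "\<forall>\<^sub>F l in sequentially. ln (real (card (language_len \<theta> l))) / real l = 0"
      by (auto simp: eventually_sequentially intro: exI[of _ 2])
    then have "(\<lambda>l. ln (real (card (language_len \<theta> l))) / real l) \<longlonglongrightarrow> 0" by (rule tendsto_eventually)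
    then have "s = 0" using assms(5) LIMSEQ_unique by (auto simp: has_topological_entropy_def)
    then show ?thesis using True by (simp add: lam_def[symmetric])
  next
    case False
    then have lam1: "lam > 1" using lam_ge by simp
    interpret P: pf "subst_matrix \<theta>" R lam k using lam1 by unfold_locales
    define c where "c = q \<bullet> R / (lam - 1)"
    have qR: "q \<bullet> R \<ge> 0" unfolding inner_vec_def
      by (auto intro!: sum_nonneg mult_nonneg_nonneg q_nonneg Rnn)
    have c0: "c \<ge> 0" unfolding c_def using qR lam1 by simp
    define n where "n = CARD('a)"
    have n1: "real n \<ge> 1" unfolding n_def by (simp add: Suc_leI)
    have lnn: "ln (real n) \<ge> 0" using n1 by simp
    have yxs: "y j a = P.xs (abelianisation [a]) j" for j a by (simp add: y_def P.xs_def)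
    have x0pos: "(mat_pow (subst_matrix \<theta>) k *v abelianisation [a]) $ i > 0" for a i
      using Ppos by (simp add: mat_col)
    have "s \<le> c"
    proof (rule field_le_epsilon)
      fix \<epsilon> :: real assume e0: "\<epsilon> > 0"
      define B where "B = max 1 (2 * (1 + ln (real n)) / \<epsilon>)"
      have B1: "B \<ge> 1" unfolding B_def by simp
      have "\<forall>\<^sub>F p in sequentially. \<forall>a. (\<Sum>j<p. q \<bullet> y j a) \<le> (c + \<epsilon>/2) * (\<Sum>i\<in>UNIV. y p a $ i)
             \<and> B \<le> (\<Sum>i\<in>UNIV. y p a $ i)"
      proof (rule eventually_all_finite)
        fix a
        have h1: "\<forall>\<^sub>F p in sequentially. (\<Sum>j<p. q \<bullet> y j a) \<le> (c + \<epsilon>/2) * (\<Sum>i\<in>UNIV. y p a $ i)"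
          using P.main_bound[of "abelianisation [a]" q "\<epsilon>/2"] x0pos q_nonneg e0
          by (auto simp: eventually_sequentially yxs c_def)
        have h2: "\<forall>\<^sub>F p in sequentially. B \<le> (\<Sum>i\<in>UNIV. y p a $ i)"
          using P.len_big[of "abelianisation [a]" B] x0pos
          by (auto simp: eventually_sequentially yxs)
        show "\<forall>\<^sub>F p in sequentially. (\<Sum>j<p. q \<bullet> y j a) \<le> (c + \<epsilon>/2) * (\<Sum>i\<in>UNIV. y p a $ i)
             \<and> B \<le> (\<Sum>i\<in>UNIV. y p a $ i)"
          using h1 h2 by (rule eventually_conj)
      qed
      then obtain p where pb: "\<And>a. (\<Sum>j<p. q \<bullet> y j a) \<le> (c + \<epsilon>/2) * (\<Sum>i\<in>UNIV. y p a $ i)"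
          and pB: "\<And>a. B \<le> (\<Sum>i\<in>UNIV. y p a $ i)"
        by (auto simp: eventually_sequentially)
      define \<tau> where "\<tau> = subst_pow \<theta> p"
      define L where "L a = length (SOME w. w \<in> \<tau> a)" for a
      have Lr: "real (L a) = (\<Sum>i\<in>UNIV. y p a $ i)" for a
      proof -
        have "(SOME w. w \<in> \<tau> a) \<in> \<tau> a" using sp_ne[of p a] unfolding \<tau>_def by (simp add: some_in_eq)
        then show ?thesis unfolding L_def \<tau>_def using length_subst_pow by blast
      qed
      have lent: "length w = L a" if "w \<in> \<tau> a" for w a
        using length_subst_pow[of w p a] that Lr[of a] unfolding \<tau>_def by simp
      have fint: "finite (\<tau> a)" for a unfolding \<tau>_def by (rule finite_subst_pow) (rule fin)
      define C where "C = c + \<epsilon>/2"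
      have C0: "C \<ge> 0" unfolding C_def using c0 e0 by simp
      have ct: "real (card (\<tau> a)) \<le> exp (C * real (L a))" for a
      proof -
        have "(\<Sum>j<p. q \<bullet> y j a) \<le> C * real (L a)" using pb[of a] Lr[of a] by (simp add: C_def)
        then show ?thesis unfolding \<tau>_def by (intro order_trans[OF card_subst_pow[of p a]]) simp
      qed
      define m where "m = Min (range L)"
      define Mx where "Mx = Max (range L)"
      have mL: "m \<le> L a" for a unfolding m_def by (rule Min_le) auto
      have LM: "L a \<le> Mx" for a unfolding Mx_def by (rule Max_ge) auto
      have mB: "real m \<ge> B"
      proof -
        have "m \<in> range L" unfolding m_def by (rule Min_in) auto
        then obtain a where "m = L a" by auto
        then show ?thesis using Lr[of a] pB[of a] by simp
      qed
      have m1: "m \<ge> 1" using mB B1 by simp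
      have Mx1: "Mx \<ge> 1" using mL[of undefined] LM[of undefined] m1 by simp
      have Mxt: "length w \<le> Mx" if "w \<in> \<tau> a" for w a using lent[OF that] LM[of a] by simp
      define H where "H = (\<Sum>j<p. \<Sum>a\<in>UNIV. \<Sum>i\<in>UNIV. y j a $ i)"
      have yl_nn: "(\<Sum>i\<in>UNIV. y j a $ i) \<ge> 0" for j a
      proof -
        obtain w where "w \<in> subst_pow \<theta> j a" using sp_ne by blast
        then show ?thesis using length_subst_pow by fastforce
      qed
      have yH: "(\<Sum>i\<in>UNIV. y j a $ i) \<le> H" if "j < p" for j a
      proof -
        have "(\<Sum>i\<in>UNIV. y j a $ i) \<le> (\<Sum>a\<in>UNIV. \<Sum>i\<in>UNIV. y j a $ i)"
          by (rule member_le_sum) (auto intro: yl_nn)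
        also have "\<dots> \<le> H" unfolding H_def using that
          by (intro member_le_sum) (auto intro!: sum_nonneg yl_nn)
        finally show ?thesis .
      qed
      define G where "G = (1 + ln (real n)) / real m + C"
      define E where "E = ln (real Mx) + 2 * real Mx * G"
      have bound: "ln (real (card (language_len \<theta> l))) / real l \<le> E / real l + G"
        if l1: "l \<ge> 1" and lH: "real l > H" for l
      proof -
        define N where "N = l + 2 * Mx"
        define K where "K = N div m"
        define W where "W = {take l (drop d x) | u x d. x \<in> subst_word \<tau> u \<and> d < Mx \<and> length x \<le> N}"
        have sub: "language_len \<theta> l \<subseteq> W"
        proof
          fix v assume "v \<in> language_len \<theta> l"
          then obtain a j w Pr Sf where v: "length v = l" "w \<in> subst_pow \<theta> j a" "w = Pr @ v @ Sf"
            unfolding language_len_def language_def by blast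
          have jp: "j \<ge> p"
          proof (rule ccontr)
            assume "\<not> j \<ge> p"
            then have "real (length w) \<le> H" using yH[of j a] length_subst_pow[OF v(2)] by simp
            moreover have "length w \<ge> l" using v by simp
            ultimately show False using lH by linarith
          qed
          then have "subst_pow \<theta> j a = subst_pow \<theta> ((j - p) + p) a" by simp
          then obtain u where "u \<in> subst_pow \<theta> (j - p) a" "w \<in> subst_word \<tau> u"
            using v(2) subst_pow_add[of \<theta> "j - p" p a] unfolding \<tau>_def by auto
          moreover have "v \<noteq> []" using v(1) l1 by auto
          ultimately obtain u2 x2 d where "x2 \<in> subst_word \<tau> u2" "d < Mx" "v = take (length v) (drop d x2)"
              "length x2 \<le> length v + 2 * Mx"
            using cover[of \<tau> Mx w u Pr v Sf] Mxt v(3) by blast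
          then show "v \<in> W" unfolding W_def N_def using v(1) by blast
        qed
        have finW: "finite W"
        proof (rule finite_subset)
          show "W \<subseteq> {xs. set xs \<subseteq> UNIV \<and> length xs \<le> l}" unfolding W_def by auto
        qed (rule finite_lists_length_le, simp)
        have cW: "real (card W) \<le> real Mx * (real K + 1) * real n ^ K * exp (C * real N)"
          unfolding W_def K_def n_def by (rule count_W[OF fint lent mL m1 C0 ct])
        have cL: "real (card (language_len \<theta> l)) \<le> exp (ln (real Mx) + real K * (1 + ln (real n)) + C * real N)"
        proof -
          have "real (card (language_len \<theta> l)) \<le> real (card W)" using card_mono[OF finW sub] by simp
          also have "\<dots> \<le> real Mx * (real K + 1) * real n ^ K * exp (C * real N)" by (rule cW)
          also have "\<dots> \<le> exp (ln (real Mx)) * exp (real K) * exp (real K * ln (real n)) * exp (C * real N)"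
          proof -
            have "real K + 1 \<le> exp (real K)" using exp_ge_add_one_self[of "real K"] by linarith
            moreover have "real n ^ K = exp (real K * ln (real n))" using n1
              by (simp add: exp_of_nat_mult)
            moreover have "real Mx = exp (ln (real Mx))" using Mx1 by simp
            ultimately show ?thesis using Mx1 by (intro mult_right_mono mult_left_mono) auto
          qed
          also have "\<dots> = exp (ln (real Mx) + real K * (1 + ln (real n)) + C * real N)"
            by (simp add: exp_add[symmetric] algebra_simps)
          finally show ?thesis .
        qed
        have Z: "ln (real (card (language_len \<theta> l))) \<le> ln (real Mx) + real K * (1 + ln (real n)) + C * real N"
        proof (cases "card (language_len \<theta> l) = 0")
          case True
          then show ?thesis using Mx1 lnn C0 by simp
        next
          case False
          then have "ln (real (card (language_len \<theta> l))) \<le> ln (exp (ln (real Mx) + real K * (1 + ln (real n)) + C * real N))"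
            using cL by (subst ln_le_cancel_iff) auto
          then show ?thesis by simp
        qed
        have KN: "real K \<le> real N / real m"
        proof -
          have "K * m \<le> N" unfolding K_def using m1 less_eq_div_iff_mult_less_eq[of m K N] by simp
          then have "real K * real m \<le> real N" by (metis of_nat_le_iff of_nat_mult)
          then show ?thesis using m1 by (simp add: le_divide_eq)
        qed
        have "ln (real Mx) + real K * (1 + ln (real n)) + C * real N
            \<le> ln (real Mx) + real N / real m * (1 + ln (real n)) + C * real N"
        proof -
          have "real K * (1 + ln (real n)) \<le> real N / real m * (1 + ln (real n))"
            by (rule mult_right_mono[OF KN]) (use lnn in simp)
          then show ?thesis by linarith
        qed
        also have "\<dots> = E + G * real l"
        proof -
          have e1: "real N / real m * (1 + ln (real n)) = real N * ((1 + ln (real n)) / real m)" by simp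
          have e2: "real N = real l + 2 * real Mx" by (simp add: N_def)
          show ?thesis unfolding E_def G_def e1 e2 by (simp add: algebra_simps add_divide_distrib[symmetric])
        qed
        finally have "ln (real (card (language_len \<theta> l))) \<le> E + G * real l" using Z by linarith
        then have "ln (real (card (language_len \<theta> l))) / real l \<le> (E + G * real l) / real l"
          using l1 by (intro divide_right_mono) auto
        also have "(E + G * real l) / real l = E / real l + G" using l1 by (simp add: add_divide_distrib)
        finally show ?thesis .
      qed
      have "s \<le> G"
      proof (rule LIMSEQ_le)
        show "(\<lambda>l. ln (real (card (language_len \<theta> l))) / real l) \<longlonglongrightarrow> s"
          using assms(5) by (simp add: has_topological_entropy_def)
        show "(\<lambda>l. E / real l + G) \<longlonglongrightarrow> G"
          using tendsto_add[OF lim_const_over_n[of E] tendsto_const[of G]] by simp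
        obtain l0 :: nat where "real l0 > H" using reals_Archimedean2 by blast
        then show "\<exists>N. \<forall>l\<ge>N. ln (real (card (language_len \<theta> l))) / real l \<le> E / real l + G"
        proof (intro exI[of _ "max 1 l0"] allI impI)
          fix l assume "max 1 l0 \<le> l"
          then have "1 \<le> l" "real l0 \<le> real l" by auto
          then show "ln (real (card (language_len \<theta> l))) / real l \<le> E / real l + G"
            using bound \<open>real l0 > H\<close> by simp
        qed
      qed
      also have "G \<le> c + \<epsilon>"
      proof -
        have "(1 + ln (real n)) / real m \<le> (1 + ln (real n)) / B"
          using mB B1 lnn by (intro divide_left_mono) auto
        also have "\<dots> \<le> \<epsilon> / 2"
        proof -
          have "2 * (1 + ln (real n)) / \<epsilon> \<le> B" unfolding B_def by simp
          then show ?thesis using e0 B1 by (simp add: divide_simps) (simp add: algebra_simps)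
        qed
        finally have "(1 + ln (real n)) / real m \<le> \<epsilon> / 2" .
        then show ?thesis unfolding G_def C_def by linarith
      qed
      finally show "s \<le> c + \<epsilon>" .
    qed
    then show ?thesis unfolding c_def lam_def .
  qed
qed


end
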